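(* Let $d\ge2$ and $\rho\ge1$. For every $\rho$-balanced rectangle $R\subseteq\mathbb Z^d$ and every $X\subseteq R$ we have $p^R(X)\ge\frac{p(X)}{3d\rho}\cdot\frac{|R\setminus X|}{|R|}$.
   Context: For $X\subseteq\mathbb Z^d$, $\partial X$ is the set of ordered pairs $(m,n)$ with $m\in X$, $n\notin X$, $n-m=\pm e_j$ for a standard basis vector $e_j$; $p(X):=|\partial X|$. For $R\subseteq\mathbb Z^d$, $\partial^RX:=\partial X\cap R^2$ and $p^R(X):=|\partial^RX|$. A rectangle is $\prod_{j=1}^d\{a_j,\dots,b_j\}$ with side lengths $b_j-a_j+1$; it is $\rho$-balanced if the ratio of any two side lengths is at most $\rho$. *)

theory Defs
  imports Main Complex_Main
begin

text \<open>Points of Z^d are integer lists of length d; coordinates indexed 0..d-1.\<close>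

definition lattice :: "nat \<Rightarrow> int list set" where
  "lattice d = {x. length x = d}"

definition nbr :: "nat \<Rightarrow> int list \<Rightarrow> int list \<Rightarrow> bool" where
  "nbr d m n \<longleftrightarrow> length m = d \<and>
     (\<exists>j<d. n = m[j := m ! j + 1] \<or> n = m[j := m ! j - 1])"

definition edge_boundary :: "nat \<Rightarrow> int list set \<Rightarrow> (int list \<times> int list) set" where
  "edge_boundary d X = {(m, n). m \<in> X \<and> n \<notin> X \<and> nbr d m n}"

definition perim :: "nat \<Rightarrow> int list set \<Rightarrow> nat" where
  "perim d X = card (edge_boundary d X)"

definition rel_perim :: "nat \<Rightarrow> int list set \<Rightarrow> int list set \<Rightarrow> nat" where
  "rel_perim d R X = card (edge_boundary d X \<inter> (R \<times> R))"

definition rectangle :: "nat \<Rightarrow> (nat \<Rightarrow> int) \<Rightarrow> (nat \<Rightarrow> int) \<Rightarrow> int list set" where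
  "rectangle d a b = {x. length x = d \<and> (\<forall>j<d. a j \<le> x ! j \<and> x ! j \<le> b j)}"

definition balanced :: "nat \<Rightarrow> real \<Rightarrow> (nat \<Rightarrow> int) \<Rightarrow> (nat \<Rightarrow> int) \<Rightarrow> bool" where
  "balanced d \<rho> a b \<longleftrightarrow> (\<forall>j<d. a j \<le> b j) \<and>
     (\<forall>i<d. \<forall>j<d. real_of_int (b i - a i + 1) \<le> \<rho> * real_of_int (b j - a j + 1))"

end

theory Submission
  imports Defs
begin


definition bd :: "nat \<Rightarrow> int list set \<Rightarrow> int list set \<Rightarrow> (int list \<times> int list) set" where
  "bd d X R = edge_boundary d X \<inter> (R \<times> R)"

lemma rect_finite: "finite (rectangle d a b)"
proof -
  have "rectangle d a b \<subseteq> {xs. set xs \<subseteq> (\<Union>j<d. {a j..b j}) \<and> length xs = d}"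
    by (auto simp: rectangle_def in_set_conv_nth) blast
  moreover have "finite {xs. set xs \<subseteq> (\<Union>j<d. {a j..b j}) \<and> length xs = d}"
    by (rule finite_lists_length_eq) auto
  ultimately show ?thesis by (rule finite_subset)
qed

lemma upd_mem: assumes "x \<in> rectangle d a b" "a j \<le> t" "t \<le> b j" shows "x[j:=t] \<in> rectangle d a b"
proof -
  have "length (x[j:=t]) = d" using assms by (simp add: rectangle_def)
  moreover have "\<forall>i<d. a i \<le> x[j:=t]!i \<and> x[j:=t]!i \<le> b i"
  proof (intro allI impI)
    fix i assume "i<d" then show "a i \<le> x[j:=t]!i \<and> x[j:=t]!i \<le> b i"
      using assms by (cases "i=j") (auto simp: rectangle_def)
  qed
  ultimately show ?thesis by (simp add: rectangle_def)
qed

lemma slice_eq: "j < d \<Longrightarrow> a j \<le> t \<Longrightarrow> t \<le> b j \<Longrightarrow>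
   rectangle d (a(j:=t)) (b(j:=t)) = {x \<in> rectangle d a b. x!j = t}"
proof (intro set_eqI iffI)
  fix x assume j: "j < d" "a j \<le> t" "t \<le> b j" and x: "x \<in> rectangle d (a(j:=t)) (b(j:=t))"
  have "x!j = t" using x j by (auto simp: rectangle_def)
  moreover have "\<forall>i<d. a i \<le> x!i \<and> x!i \<le> b i"
  proof (intro allI impI)
    fix i assume "i < d"
    then show "a i \<le> x!i \<and> x!i \<le> b i" using x j \<open>x!j = t\<close>
      by (cases "i = j") (auto simp: rectangle_def)
  qed
  ultimately show "x \<in> {x \<in> rectangle d a b. x!j = t}" using x by (auto simp: rectangle_def)
next
  fix x assume j: "j < d" "a j \<le> t" "t \<le> b j" and x: "x \<in> {x \<in> rectangle d a b. x!j = t}"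
  then show "x \<in> rectangle d (a(j:=t)) (b(j:=t))" by (auto simp: rectangle_def)
qed

lemma rect_nonempty: "\<forall>i<d. a i \<le> b i \<Longrightarrow> map a [0..<d] \<in> rectangle d a b"
  by (auto simp: rectangle_def)

lemma upd_back: "x!j = t \<Longrightarrow> (x[j:=s])[j:=t] = x"
  by (metis list_update_id list_update_overwrite)

lemma bd_fin: "finite (bd d X (rectangle d a b))"
  unfolding bd_def using rect_finite by (meson finite_Int finite_SigmaI)

lemma bd_mono: "R' \<subseteq> R \<Longrightarrow> bd d X R' \<subseteq> bd d X R"
  unfolding bd_def by auto

lemma disc_ivt: "P (t::int) \<Longrightarrow> \<not> P (t + int k) \<Longrightarrow> \<exists>s. t \<le> s \<and> s + 1 \<le> t + int k \<and> P s \<and> \<not> P (s+1)"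
proof (induction k)
  case 0 then show ?case by simp
next
  case (Suc k)
  show ?case
  proof (cases "P (t + int k)")
    case True
    then show ?thesis using Suc.prems by (intro exI[of _ "t + int k"]) (auto simp: algebra_simps)
  next
    case False
    then obtain s where "t \<le> s \<and> s + 1 \<le> t + int k \<and> P s \<and> \<not> P (s+1)" using Suc by blast
    then show ?thesis by (intro exI[of _ s]) auto
  qed
qed

lemma disc_ivt2: "P (t1::int) \<Longrightarrow> \<not> P t2 \<Longrightarrow>
   \<exists>s. min t1 t2 \<le> s \<and> s + 1 \<le> max t1 t2 \<and> (P s \<and> \<not> P (s+1) \<or> \<not> P s \<and> P (s+1))"
proof (cases "t1 \<le> t2")
  case True
  then obtain k where "t2 = t1 + int k" by (metis zle_iff_zadd)
  moreover assume "P t1" "\<not> P t2"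
  ultimately show ?thesis using disc_ivt[of P t1 k] True by auto
next
  case False
  then obtain k where k: "t1 = t2 + int k" by (metis linorder_le_cases zle_iff_zadd)
  assume "P t1" "\<not> P t2"
  then obtain s where "t2 \<le> s \<and> s + 1 \<le> t2 + int k \<and> \<not> P s \<and> \<not> \<not> P (s+1)"
    using disc_ivt[of "\<lambda>x. \<not> P x" t2 k] k by auto
  then show ?thesis using False k by (intro exI[of _ s]) auto
qed



context
  fixes d :: nat and a b :: "nat \<Rightarrow> int" and j :: nat
  assumes j: "j < d" and ab: "\<forall>i<d. a i \<le> b i"
begin

abbreviation "RR \<equiv> rectangle d a b"
abbreviation "II \<equiv> {a j..b j}"
abbreviation "SS t \<equiv> rectangle d (a(j:=t)) (b(j:=t))"

lemma sl_eq: "t \<in> II \<Longrightarrow> SS t = {x \<in> RR. x!j = t}"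
  using slice_eq j by auto

lemma len_R: "x \<in> RR \<Longrightarrow> length x = d" by (simp add: rectangle_def)

lemma R_coord: "x \<in> RR \<Longrightarrow> x!j \<in> II" using j by (simp add: rectangle_def)

lemma S_sub: "t \<in> II \<Longrightarrow> SS t \<subseteq> RR" using sl_eq by auto

lemma sl_card: assumes s: "s \<in> II" and t: "t \<in> II" shows "card (SS s) = card (SS t)"
proof -
  have img: "(\<lambda>x. x[j:=t]) ` {x\<in>RR. x!j = s} = {x\<in>RR. x!j=t}"
  proof (intro equalityI subsetI)
    fix y assume "y \<in> (\<lambda>x. x[j:=t]) ` {x\<in>RR. x!j = s}"
    then obtain x where x: "x \<in> RR" "x!j = s" "y = x[j:=t]" by auto
    then show "y \<in> {x\<in>RR. x!j=t}" using upd_mem[OF x(1), of j t] t len_R[OF x(1)] j by auto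
  next
    fix y assume y: "y \<in> {x\<in>RR. x!j=t}"
    then have "y[j:=s] \<in> {x\<in>RR. x!j = s}" using upd_mem[of y d a b j s] s len_R[of y] j by auto
    moreover have "y = (y[j:=s])[j:=t]" using y upd_back by auto
    ultimately show "y \<in> (\<lambda>x. x[j:=t]) ` {x\<in>RR. x!j = s}" by blast
  qed
  have inj: "inj_on (\<lambda>x. x[j:=t]) {x\<in>RR. x!j = s}"
  proof (rule inj_onI)
    fix x y assume "x \<in> {x\<in>RR. x!j = s}" "y \<in> {x\<in>RR. x!j = s}" "x[j:=t] = y[j:=t]"
    then show "x = y" by (metis (mono_tags, lifting) mem_Collect_eq upd_back)
  qed
  show ?thesis using card_image[OF inj] img sl_eq s t by simp
qed

lemma R_union: "RR = (\<Union>t\<in>II. SS t)"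
  using sl_eq R_coord by auto

lemma S_disj: "s \<in> II \<Longrightarrow> t \<in> II \<Longrightarrow> s \<noteq> t \<Longrightarrow> SS s \<inter> SS t = {}"
  using sl_eq by auto

lemma cardR: assumes t: "t \<in> II" shows "card RR = card II * card (SS t)"
proof -
  have h1: "card (\<Union>t\<in>II. SS t) = (\<Sum>s\<in>II. card (SS s))"
    apply (rule card_UN_disjoint) apply simp apply (simp add: rect_finite) apply (intro ballI impI) apply (rule S_disj) by auto
  have h2: "card RR = card (\<Union>t\<in>II. SS t)" using R_union by (rule arg_cong)
  have "card RR = (\<Sum>s\<in>II. card (SS s))" by (rule trans[OF h2 h1])
  also have "\<dots> = (\<Sum>s\<in>II. card (SS t))" apply (rule sum.cong) apply (rule refl) apply (rule sl_card[OF _ t]) by assumption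
  finally show ?thesis by simp
qed


lemma mixed:
  assumes u: "u \<in> RR" and t1: "t1 \<in> II" and t2: "t2 \<in> II" and in1: "u[j:=t1] \<in> X" and out2: "u[j:=t2] \<notin> X"
  shows "\<exists>m n. (m,n) \<in> bd d X RR \<and> m!j \<noteq> n!j \<and> (\<forall>c. m[j:=c] = u[j:=c])"
proof -
  obtain s where s: "min t1 t2 \<le> s" "s+1 \<le> max t1 t2" and
    P: "(u[j:=s] \<in> X \<and> u[j:=s+1] \<notin> X) \<or> (u[j:=s] \<notin> X \<and> u[j:=s+1] \<in> X)"
    using disc_ivt2[of "\<lambda>t. u[j:=t] \<in> X" t1 t2] in1 out2 by blast
  have sI: "a j \<le> s" "s + 1 \<le> b j" using s t1 t2 by auto
  have lu: "length u = d" using len_R u .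
  have m1: "u[j:=s] \<in> RR" using upd_mem[OF u] sI by simp
  have m2: "u[j:=s+1] \<in> RR" using upd_mem[OF u] sI by simp
  have js: "u[j:=s]!j = s" "u[j:=s+1]!j = s+1" using lu j by auto
  have up: "u[j:=s+1] = (u[j:=s])[j := u[j:=s]!j + 1]" using js by simp
  have dn: "u[j:=s] = (u[j:=s+1])[j := u[j:=s+1]!j - 1]" using js by simp
  have nb1: "nbr d (u[j:=s]) (u[j:=s+1])" unfolding nbr_def
    apply (rule conjI) using lu apply simp apply (rule exI[of _ j]) using j up by simp
  have nb2: "nbr d (u[j:=s+1]) (u[j:=s])" unfolding nbr_def
    apply (rule conjI) using lu apply simp apply (rule exI[of _ j]) using j dn by simp
  have c1: "\<forall>c. (u[j:=s])[j:=c] = u[j:=c]" "\<forall>c. (u[j:=s+1])[j:=c] = u[j:=c]" by simp_all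
  from P show ?thesis
  proof
    assume "u[j:=s] \<in> X \<and> u[j:=s+1] \<notin> X"
    then have "(u[j:=s], u[j:=s+1]) \<in> bd d X RR" using m1 m2 nb1 by (simp add: bd_def edge_boundary_def)
    then show ?thesis using js c1 by (intro exI[of _ "u[j:=s]"] exI[of _ "u[j:=s+1]"]) simp
  next
    assume "u[j:=s] \<notin> X \<and> u[j:=s+1] \<in> X"
    then have "(u[j:=s+1], u[j:=s]) \<in> bd d X RR" using m1 m2 nb2 by (simp add: bd_def edge_boundary_def)
    then show ?thesis using js c1 by (intro exI[of _ "u[j:=s+1]"] exI[of _ "u[j:=s]"]) simp
  qed
qed

lemma first_face:
  assumes c: "c \<in> II" and A: "A \<subseteq> X \<inter> SS c"
  shows "card {(x,t). x\<in>A \<and> t\<in>II \<and> x[j:=t] \<notin> X} \<le> card (bd d X RR) * card II"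
proof -
  define U where "U = {x\<in>A. \<exists>t\<in>II. x[j:=t]\<notin>X}"
  have sub: "U \<subseteq> (\<lambda>(m,n). m[j:=c]) ` bd d X RR"
  proof
    fix x assume "x \<in> U"
    then obtain t where x: "x\<in>A" "t\<in>II" "x[j:=t]\<notin>X" unfolding U_def by auto
    have xS: "x \<in> RR" "x!j = c" "x\<in>X" using A x(1) sl_eq[OF c] by auto
    have "x[j:=c] \<in> X" using xS by (metis list_update_id)
    then obtain m n where mn: "(m,n) \<in> bd d X RR" "\<forall>c. m[j:=c] = x[j:=c]"
      using mixed[OF xS(1) c x(2)] x(3) by blast
    have "x = (\<lambda>(m,n). m[j:=c]) (m,n)" using mn(2) xS(2) by (metis case_prod_conv list_update_id)
    then show "x \<in> (\<lambda>(m,n). m[j:=c]) ` bd d X RR" using mn(1) by blast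
  qed
  have "card U \<le> card ((\<lambda>(m,n). m[j:=c]) ` bd d X RR)"
    by (rule card_mono[OF finite_imageI[OF bd_fin] sub])
  also have "\<dots> \<le> card (bd d X RR)" by (rule card_image_le[OF bd_fin])
  finally have cU: "card U \<le> card (bd d X RR)" .
  have "U \<subseteq> SS c" using A unfolding U_def by auto
  then have finU: "finite U" using rect_finite by (rule finite_subset)
  have "{(x,t). x\<in>A \<and> t\<in>II \<and> x[j:=t] \<notin> X} \<subseteq> U \<times> II" unfolding U_def by auto
  then have "card {(x,t). x\<in>A \<and> t\<in>II \<and> x[j:=t] \<notin> X} \<le> card (U \<times> II)"
    using finU by (intro card_mono) auto
  also have "\<dots> = card U * card II" by (rule card_cartesian_product)
  also have "\<dots> \<le> card (bd d X RR) * card II" using cU by simp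
  finally show ?thesis .
qed

lemma first_count:
  assumes A: "A \<subseteq> RR" and t0: "t0 \<in> II"
  shows "card {(x,y). x\<in>A \<and> y\<in>RR \<and> x[j:=y!j] \<notin> X} \<le> card {(x,t). x\<in>A \<and> t\<in>II \<and> x[j:=t]\<notin>X} * card (SS t0)"
proof -
  define W where "W = {(x,t). x\<in>A \<and> t\<in>II \<and> x[j:=t]\<notin>X}"
  have finA: "finite A" using A rect_finite finite_subset by blast
  have finW: "finite W" unfolding W_def
    by (rule finite_subset[of _ "A \<times> II"]) (auto simp: finA)
  have sub: "{(x,y). x\<in>A \<and> y\<in>RR \<and> x[j:=y!j] \<notin> X} \<subseteq> (\<Union>w\<in>W. {fst w} \<times> SS (snd w))"
  proof (clarify)
    fix x y assume xy: "x\<in>A" "y\<in>RR" "x[j:=y!j] \<notin> X"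
    have "(x, y!j) \<in> W" unfolding W_def using xy R_coord by auto
    moreover have "y \<in> SS (y!j)" using sl_eq[OF R_coord[OF xy(2)]] xy(2) by simp
    ultimately show "(x,y) \<in> (\<Union>w\<in>W. {fst w} \<times> SS (snd w))" by force
  qed
  have fin2: "finite (\<Union>w\<in>W. {fst w} \<times> SS (snd w))"
    using finW rect_finite by (intro finite_UN_I) auto
  have "card {(x,y). x\<in>A \<and> y\<in>RR \<and> x[j:=y!j] \<notin> X} \<le> card (\<Union>w\<in>W. {fst w} \<times> SS (snd w))"
    by (rule card_mono[OF fin2 sub])
  also have "\<dots> \<le> (\<Sum>w\<in>W. card ({fst w} \<times> SS (snd w)))" by (rule card_UN_le[OF finW])
  also have "\<dots> = (\<Sum>w\<in>W. card (SS t0))"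
  proof (rule sum.cong[OF refl])
    fix w assume "w \<in> W"
    then have "snd w \<in> II" unfolding W_def by auto
    then show "card ({fst w} \<times> SS (snd w)) = card (SS t0)"
      using sl_card[OF _ t0] by (simp add: card_cartesian_product)
  qed
  also have "\<dots> = card W * card (SS t0)" by simp
  finally show ?thesis unfolding W_def .
qed

definition QQ :: "int list set \<Rightarrow> (int list \<times> int list) set" where
  "QQ X = (\<Union>t\<in>II. (X \<inter> SS t) \<times> (SS t - X))"

lemma QQ_fin: "finite (QQ X)"
  unfolding QQ_def using rect_finite by (intro finite_UN_I) auto

lemma QQ_card: "card (QQ X) = (\<Sum>t\<in>II. card (X \<inter> SS t) * card (SS t - X))"
proof -
  have "card (QQ X) = (\<Sum>t\<in>II. card ((X \<inter> SS t) \<times> (SS t - X)))"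
    unfolding QQ_def
    apply (rule card_UN_disjoint) apply simp apply (simp add: rect_finite)
    apply (intro ballI impI) using S_disj by blast
  then show ?thesis by (simp add: card_cartesian_product)
qed

lemma second_face:
  assumes c: "c \<in> II" and A: "A \<subseteq> SS c"
  shows "card {(x,y). x\<in>A \<and> y\<in>RR-X \<and> x[j:=y!j]\<in>X} \<le> card (QQ X)"
proof (rule card_inj_on_le[OF _ _ QQ_fin])
  show "inj_on (\<lambda>(x,y). (x[j:=y!j], y)) {(x,y). x\<in>A \<and> y\<in>RR-X \<and> x[j:=y!j]\<in>X}"
  proof (rule inj_onI)
    fix p q assume hp: "p \<in> {(x,y). x\<in>A \<and> y\<in>RR-X \<and> x[j:=y!j]\<in>X}"
      "q \<in> {(x,y). x\<in>A \<and> y\<in>RR-X \<and> x[j:=y!j]\<in>X}"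
      "(\<lambda>(x,y). (x[j:=y!j], y)) p = (\<lambda>(x,y). (x[j:=y!j], y)) q"
    obtain x y x' y' where pq: "p = (x,y)" "q = (x',y')" by (cases p, cases q) auto
    then have h: "x\<in>A" "x'\<in>A" "y = y'" "x[j:=y!j] = x'[j:=y'!j]" using hp by auto
    have "x!j = c" "x'!j = c" using h A sl_eq[OF c] by auto
    then have "x = x'" using h(3,4) by (metis upd_back)
    then show "p = q" using pq h(3) by simp
  qed
  show "(\<lambda>(x,y). (x[j:=y!j], y)) ` {(x,y). x\<in>A \<and> y\<in>RR-X \<and> x[j:=y!j]\<in>X} \<subseteq> QQ X"
  proof (clarify)
    fix x y assume h: "x\<in>A" "y\<in>RR" "y\<notin>X" "x[j:=y!j]\<in>X"
    have t: "y!j \<in> II" using R_coord h(2) .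
    have xR: "x \<in> RR" using h(1) A S_sub[OF c] by auto
    have w: "x[j:=y!j] \<in> RR" using upd_mem[OF xR] t by auto
    have wj: "x[j:=y!j] ! j = y!j" using len_R[OF xR] j by simp
    have "x[j:=y!j] \<in> X \<inter> SS (y!j)" using w wj h(4) sl_eq[OF t] by simp
    moreover have "y \<in> SS (y!j) - X" using h(2,3) sl_eq[OF t] by simp
    ultimately show "(x[j:=y!j], y) \<in> QQ X" unfolding QQ_def using t by blast
  qed
qed

lemma second_gen:
  "card {(x,y). x\<in>X\<inter>RR \<and> y\<in>RR-X \<and> x[j:=y!j]\<in>X} \<le> card II * card (QQ X)"
proof -
  have eq: "{(x,y). x\<in>X\<inter>RR \<and> y\<in>RR-X \<and> x[j:=y!j]\<in>X} =
     (\<Union>s\<in>II. {(x,y). x\<in>X\<inter>SS s \<and> y\<in>RR-X \<and> x[j:=y!j]\<in>X})"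
  proof (intro equalityI subsetI)
    fix p assume "p \<in> {(x,y). x\<in>X\<inter>RR \<and> y\<in>RR-X \<and> x[j:=y!j]\<in>X}"
    then obtain x y where p: "p = (x,y)" "x\<in>X" "x\<in>RR" "y\<in>RR" "y\<notin>X" "x[j:=y!j]\<in>X" by auto
    have "x!j \<in> II" using R_coord p(3) .
    moreover have "x \<in> SS (x!j)" using sl_eq[OF R_coord[OF p(3)]] p(3) by simp
    ultimately show "p \<in> (\<Union>s\<in>II. {(x,y). x\<in>X\<inter>SS s \<and> y\<in>RR-X \<and> x[j:=y!j]\<in>X})"
      using p by blast
  next
    fix p assume "p \<in> (\<Union>s\<in>II. {(x,y). x\<in>X\<inter>SS s \<and> y\<in>RR-X \<and> x[j:=y!j]\<in>X})"
    then obtain s where "s \<in> II" "p \<in> {(x,y). x\<in>X\<inter>SS s \<and> y\<in>RR-X \<and> x[j:=y!j]\<in>X}" by blast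
    then show "p \<in> {(x,y). x\<in>X\<inter>RR \<and> y\<in>RR-X \<and> x[j:=y!j]\<in>X}" using S_sub by blast
  qed
  have "card (\<Union>s\<in>II. {(x,y). x\<in>X\<inter>SS s \<and> y\<in>RR-X \<and> x[j:=y!j]\<in>X}) \<le>
     (\<Sum>s\<in>II. card {(x,y). x\<in>X\<inter>SS s \<and> y\<in>RR-X \<and> x[j:=y!j]\<in>X})"
    by (rule card_UN_le) simp
  also have "\<dots> \<le> (\<Sum>s\<in>II. card (QQ X))"
  proof (rule sum_mono)
    fix s assume s: "s \<in> II"
    have "{(x,y). x\<in>X\<inter>SS s \<and> y\<in>RR-X \<and> x[j:=y!j]\<in>X} = {(x,y). x\<in>X\<inter>SS s \<and> y\<in>RR-X \<and> x[j:=y!j]\<in>X}" ..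
    then show "card {(x,y). x\<in>X\<inter>SS s \<and> y\<in>RR-X \<and> x[j:=y!j]\<in>X} \<le> card (QQ X)"
      using second_face[OF s, of "X \<inter> SS s"] by blast
  qed
  also have "\<dots> = card II * card (QQ X)" by simp
  finally show ?thesis using eq by simp
qed


lemma four_prod: "(k::nat) \<le> L \<Longrightarrow> 4 * (k * (L - k)) \<le> L^2"
proof -
  assume "k \<le> L"
  then obtain m where L: "L = k + m" using le_Suc_ex by blast
  have "0 \<le> (int k - int m)^2" by simp
  then have "4 * (int k * int m) \<le> (int k + int m)^2" by (simp add: power2_eq_square algebra_simps)
  then have "int (4 * (k * m)) \<le> int ((k+m)^2)" by (simp only: of_nat_mult of_nat_power of_nat_add of_nat_numeral)
  then have "4 * (k * m) \<le> (k+m)^2" by (simp only: of_nat_le_iff)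
  then show ?thesis using L by simp
qed

lemma first_gen:
  "4 * card {(x,t). x\<in>X\<inter>RR \<and> t\<in>II \<and> x[j:=t]\<notin>X} \<le> (card II)^2 * card {p \<in> bd d X RR. fst p ! j \<noteq> snd p ! j}"
proof -
  define W where "W = {(x,t). x\<in>X\<inter>RR \<and> t\<in>II \<and> x[j:=t]\<notin>X}"
  define Bj where "Bj = {p \<in> bd d X RR. fst p ! j \<noteq> snd p ! j}"
  define U where "U = {u\<in>SS (a j). \<exists>t1\<in>II. \<exists>t2\<in>II. u[j:=t1]\<in>X \<and> u[j:=t2]\<notin>X}"
  define Sx where "Sx u = {s\<in>II. u[j:=s]\<in>X}" for u
  define Ls where "Ls u = (\<lambda>(s,t). (u[j:=s],t)) ` (Sx u \<times> (II - Sx u))" for u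
  have aI: "a j \<in> II" using ab j by simp
  have finU: "finite U" unfolding U_def using rect_finite by simp
  have finB: "finite Bj" unfolding Bj_def using bd_fin by simp
  have finSx: "finite (Sx u)" for u unfolding Sx_def by (rule finite_subset[of _ II]) auto
  have finLs: "finite (Ls u)" for u unfolding Ls_def using finSx[of u] by simp
  have subW: "W \<subseteq> (\<Union>u\<in>U. Ls u)"
  proof
    fix p assume "p \<in> W"
    then obtain x t where p: "p = (x,t)" "x\<in>X" "x\<in>RR" "t\<in>II" "x[j:=t]\<notin>X" unfolding W_def by auto
    define u where "u = x[j:=a j]"
    have uR: "u \<in> RR" unfolding u_def using upd_mem[OF p(3)] aI by simp
    have uj: "u!j = a j" unfolding u_def using len_R[OF p(3)] j by simp
    have uS: "u \<in> SS (a j)" using sl_eq[OF aI] uR uj by simp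
    have xu: "x = u[j:=x!j]" unfolding u_def by simp
    have xj: "x!j \<in> II" using R_coord[OF p(3)] .
    have ut: "u[j:=t] = x[j:=t]" unfolding u_def by simp
    have ux: "u[j:=x!j] \<in> X" using xu p(2) by simp
    have "u[j:=t] \<notin> X" using ut p(5) by simp
    then have "u \<in> U" unfolding U_def using uS xj p(4) ux by blast
    moreover have "p \<in> Ls u"
    proof -
      have "(x!j, t) \<in> Sx u \<times> (II - Sx u)" unfolding Sx_def using xj p(4) xu p(2) ut p(5) by auto
      moreover have "p = (\<lambda>(s,t). (u[j:=s],t)) (x!j, t)" using p(1) xu by simp
      ultimately show ?thesis unfolding Ls_def by blast
    qed
    ultimately show "p \<in> (\<Union>u\<in>U. Ls u)" by blast
  qed
  have subU: "U \<subseteq> (\<lambda>(m,n). m[j:=a j]) ` Bj"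
  proof
    fix u assume "u \<in> U"
    then obtain t1 t2 where u: "u \<in> SS (a j)" "t1\<in>II" "t2\<in>II" "u[j:=t1]\<in>X" "u[j:=t2]\<notin>X"
      unfolding U_def by blast
    have uR: "u \<in> RR" "u!j = a j" using u(1) sl_eq[OF aI] by auto
    obtain m n where mn: "(m,n) \<in> bd d X RR" "m!j \<noteq> n!j" "\<forall>c. m[j:=c] = u[j:=c]"
      using mixed[OF uR(1) u(2) u(3) u(4) u(5)] by blast
    have "(m,n) \<in> Bj" unfolding Bj_def using mn by simp
    moreover have "u = (\<lambda>(m,n). m[j:=a j]) (m,n)" using mn(3) uR(2) by (metis case_prod_conv list_update_id)
    ultimately show "u \<in> (\<lambda>(m,n). m[j:=a j]) ` Bj" by blast
  qed
  have cU: "card U \<le> card Bj"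
    using card_mono[OF finite_imageI[OF finB] subU] card_image_le[OF finB, of "\<lambda>(m,n). m[j:=a j]"] by linarith
  have cLs: "4 * card (Ls u) \<le> (card II)^2" for u
  proof -
    have "card (Ls u) \<le> card (Sx u \<times> (II - Sx u))" unfolding Ls_def by (rule card_image_le) (simp add: finSx)
    also have "\<dots> = card (Sx u) * card (II - Sx u)" by (rule card_cartesian_product)
    also have "card (II - Sx u) = card II - card (Sx u)"
      by (rule card_Diff_subset[OF finSx]) (auto simp: Sx_def)
    finally have "4 * card (Ls u) \<le> 4 * (card (Sx u) * (card II - card (Sx u)))" by simp
    also have "\<dots> \<le> (card II)^2" by (rule four_prod, rule card_mono) (auto simp: Sx_def)
    finally show ?thesis .
  qed
  have "4 * card W \<le> 4 * card (\<Union>u\<in>U. Ls u)"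
    using card_mono[OF _ subW] finU finLs by simp
  also have "\<dots> \<le> 4 * (\<Sum>u\<in>U. card (Ls u))" using card_UN_le[OF finU, of Ls] by simp
  also have "\<dots> = (\<Sum>u\<in>U. 4 * card (Ls u))" by (simp add: sum_distrib_left)
  also have "\<dots> \<le> (\<Sum>u\<in>U. (card II)^2)" by (rule sum_mono) (rule cLs)
  also have "\<dots> = card U * (card II)^2" by simp
  also have "\<dots> \<le> card Bj * (card II)^2" using cU by simp
  finally show ?thesis unfolding W_def Bj_def by (simp add: mult.commute)
qed

lemma bd_split:
  "card {p \<in> bd d X RR. fst p ! j \<noteq> snd p ! j} + (\<Sum>t\<in>II. card (bd d X (SS t))) \<le> card (bd d X RR)"
proof -
  define Bj where "Bj = {p \<in> bd d X RR. fst p ! j \<noteq> snd p ! j}"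
  have disj: "card (\<Union>t\<in>II. bd d X (SS t)) = (\<Sum>t\<in>II. card (bd d X (SS t)))"
    apply (rule card_UN_disjoint) apply simp apply (simp add: bd_fin)
    apply (intro ballI impI)
  proof -
    fix s t assume st: "s \<in> II" "t \<in> II" "s \<noteq> t"
    have "SS s \<inter> SS t = {}" using S_disj[OF st] .
    then show "bd d X (SS s) \<inter> bd d X (SS t) = {}" unfolding bd_def by blast
  qed
  have d2: "Bj \<inter> (\<Union>t\<in>II. bd d X (SS t)) = {}"
  proof (rule ccontr)
    assume "Bj \<inter> (\<Union>t\<in>II. bd d X (SS t)) \<noteq> {}"
    then obtain p t where p: "p \<in> Bj" "t \<in> II" "p \<in> bd d X (SS t)" by blast
    then have "fst p \<in> SS t" "snd p \<in> SS t" unfolding bd_def by auto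
    then have "fst p ! j = snd p ! j" using sl_eq[OF p(2)] by simp
    then show False using p(1) unfolding Bj_def by simp
  qed
  have sub: "Bj \<union> (\<Union>t\<in>II. bd d X (SS t)) \<subseteq> bd d X RR"
    unfolding Bj_def using bd_mono[OF S_sub] by blast
  have finB: "finite Bj" unfolding Bj_def using bd_fin by simp
  have finU: "finite (\<Union>t\<in>II. bd d X (SS t))" using bd_fin by simp
  have "card Bj + (\<Sum>t\<in>II. card (bd d X (SS t))) = card (Bj \<union> (\<Union>t\<in>II. bd d X (SS t)))"
    using card_Un_disjoint[OF finB finU d2] disj by simp
  also have "\<dots> \<le> card (bd d X RR)" by (rule card_mono[OF bd_fin sub])
  finally show ?thesis unfolding Bj_def .
qed

end


lemma degenerate_card0:
  assumes deg: "\<forall>i<d. a i = b i"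
  shows "card (X \<inter> rectangle d a b) * card (rectangle d a b - X) = 0"
proof -
  have one: "x = y" if "x \<in> rectangle d a b" "y \<in> rectangle d a b" for x y
  proof (rule nth_equalityI)
    show "length x = length y" using that by (simp add: rectangle_def)
    fix i assume "i < length x"
    then show "x!i = y!i" using that deg by (auto simp: rectangle_def) (metis order_antisym)
  qed
  have "X \<inter> rectangle d a b = {} \<or> rectangle d a b - X = {}"
    using one by blast
  then show ?thesis
  proof
    assume h: "X \<inter> rectangle d a b = {}" show ?thesis by (simp add: h)
  next
    assume h: "rectangle d a b - X = {}"
    then have "card (rectangle d a b - X) = 0" by (simp only: card.empty)
    then show ?thesis by simp
  qed
qed

lemma star_aux:
  fixes M :: real and X :: "int list set"
  assumes M0: "M \<ge> 0"
  shows "n \<le> d \<Longrightarrow> \<forall>a b. (\<forall>i<d. a i \<le> b i) \<longrightarrow> (\<forall>i<d. real_of_int (b i - a i + 1) \<le> M) \<longrightarrow>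
     (\<forall>i. n \<le> i \<and> i < d \<longrightarrow> a i = b i) \<longrightarrow>
     4 * real (card (X \<inter> rectangle d a b)) * real (card (rectangle d a b - X))
       \<le> M * real (card (rectangle d a b)) * real (card (bd d X (rectangle d a b)))"
proof (induction n)
  case 0
  show ?case
  proof (intro allI impI)
    fix a b :: "nat \<Rightarrow> int"
    assume "\<forall>i. 0 \<le> i \<and> i < d \<longrightarrow> a i = b i"
    then have "card (X \<inter> rectangle d a b) * card (rectangle d a b - X) = 0"
      by (intro degenerate_card0) auto
    then have "real (card (X \<inter> rectangle d a b)) * real (card (rectangle d a b - X)) = 0"
      by (metis of_nat_0 of_nat_mult)
    then have z: "4 * real (card (X \<inter> rectangle d a b)) * real (card (rectangle d a b - X)) = 0"
      by (simp only: mult.assoc mult_zero_right)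
    have "0 \<le> M * real (card (rectangle d a b)) * real (card (bd d X (rectangle d a b)))"
      using M0 by simp
    then show "4 * real (card (X \<inter> rectangle d a b)) * real (card (rectangle d a b - X))
       \<le> M * real (card (rectangle d a b)) * real (card (bd d X (rectangle d a b)))"
      using z by linarith
  qed
next
  case (Suc n)
  then have n: "n < d" "n \<le> d" by auto
  show ?case
  proof (intro allI impI)
    fix a b :: "nat \<Rightarrow> int"
    assume ab: "\<forall>i<d. a i \<le> b i" and L: "\<forall>i<d. real_of_int (b i - a i + 1) \<le> M"
      and deg: "\<forall>i. Suc n \<le> i \<and> i < d \<longrightarrow> a i = b i"
    define R where "R = rectangle d a b"
    define S where "S t = rectangle d (a(n:=t)) (b(n:=t))" for t
    have aI: "a n \<in> {a n..b n}" using ab n by simp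
    define cs where "cs = card (S (a n))"
    have IH: "4 * real (card (X \<inter> S t)) * real (card (S t - X)) \<le> M * real (card (S t)) * real (card (bd d X (S t)))"
      if t: "t \<in> {a n..b n}" for t
    proof -
      have c1: "\<forall>i<d. (a(n:=t)) i \<le> (b(n:=t)) i" using ab by simp
      have c2: "\<forall>i<d. real_of_int ((b(n:=t)) i - (a(n:=t)) i + 1) \<le> M"
      proof (intro allI impI)
        fix i assume "i < d"
        show "real_of_int ((b(n:=t)) i - (a(n:=t)) i + 1) \<le> M"
        proof (cases "i = n")
          case True
          have "real_of_int (b n - a n + 1) \<le> M" using L n by simp
          moreover have "1 \<le> real_of_int (b n - a n + 1)" using ab n by simp
          ultimately show ?thesis using True by simp
        next
          case False then show ?thesis using L \<open>i<d\<close> by simp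
        qed
      qed
      have c3: "\<forall>i. n \<le> i \<and> i < d \<longrightarrow> (a(n:=t)) i = (b(n:=t)) i" using deg
        by (metis Suc_leI fun_upd_apply order_le_imp_less_or_eq)
      show ?thesis unfolding S_def using Suc.IH[OF n(2)] c1 c2 c3 by blast
    qed
    have csS: "card (S t) = cs" if "t \<in> {a n..b n}" for t
      unfolding cs_def S_def using sl_card[OF n(1) ab that aI] .
    have cR: "card R = card {a n..b n} * cs" unfolding R_def cs_def S_def using cardR[OF n(1) ab aI] .
    define F1 where "F1 = {(x,y). x\<in>X\<inter>R \<and> y\<in>R \<and> x[n:=y!n] \<notin> X}"
    define F2 where "F2 = {(x,y). x\<in>X\<inter>R \<and> y\<in>R-X \<and> x[n:=y!n] \<in> X}"
    define W where "W = {(x,t). x\<in>X\<inter>R \<and> t\<in>{a n..b n} \<and> x[n:=t]\<notin>X}"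
    define Bj where "Bj = {p \<in> bd d X R. fst p ! n \<noteq> snd p ! n}"
    define Q where "Q = QQ d a b n X"
    have finR: "finite R" unfolding R_def by (rule rect_finite)
    have "(X \<inter> R) \<times> (R - X) \<subseteq> F1 \<union> F2" unfolding F1_def F2_def by auto
    moreover have "finite (F1 \<union> F2)"
      by (rule finite_subset[of _ "R \<times> R"]) (auto simp: F1_def F2_def finR)
    ultimately have "card ((X \<inter> R) \<times> (R - X)) \<le> card (F1 \<union> F2)" by (rule card_mono[rotated])
    also have "\<dots> \<le> card F1 + card F2" by (rule card_Un_le)
    finally have hP: "card (X \<inter> R) * card (R - X) \<le> card F1 + card F2" by (simp add: card_cartesian_product)
    have hF1: "card F1 \<le> card W * cs" unfolding F1_def W_def cs_def S_def R_def
      by (rule first_count[OF n(1) ab _ aI]) auto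
    have hW: "4 * card W \<le> (card {a n..b n})^2 * card Bj" unfolding W_def Bj_def R_def
      by (rule first_gen[OF n(1) ab])
    have hF2: "card F2 \<le> card {a n..b n} * card Q" unfolding F2_def Q_def R_def
      by (rule second_gen[OF n(1) ab])
    have hQ: "card Q = (\<Sum>t\<in>{a n..b n}. card (X \<inter> S t) * card (S t - X))"
      unfolding Q_def S_def by (rule QQ_card[OF n(1) ab])
    have hsplit: "card Bj + (\<Sum>t\<in>{a n..b n}. card (bd d X (S t))) \<le> card (bd d X R)"
      unfolding Bj_def S_def R_def by (rule bd_split[OF n(1) ab])
    define l where "l = real (card {a n..b n})"
    have lM: "l \<le> M" unfolding l_def using L n ab by simp
    have l0: "0 \<le> l" unfolding l_def by simp
    have c0: "0 \<le> real cs" by simp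
    have q4: "4 * real (card Q) \<le> M * real cs * real (\<Sum>t\<in>{a n..b n}. card (bd d X (S t)))"
    proof -
      have "4 * real (card Q) = (\<Sum>t\<in>{a n..b n}. 4 * (real (card (X \<inter> S t)) * real (card (S t - X))))"
        unfolding hQ by (simp add: sum_distrib_left)
      also have "\<dots> \<le> (\<Sum>t\<in>{a n..b n}. M * real cs * real (card (bd d X (S t))))"
      proof (rule sum_mono)
        fix t assume t: "t \<in> {a n..b n}"
        show "4 * (real (card (X \<inter> S t)) * real (card (S t - X))) \<le> M * real cs * real (card (bd d X (S t)))"
          using IH[OF t] csS[OF t] by (simp add: mult.assoc)
      qed
      also have "\<dots> = M * real cs * real (\<Sum>t\<in>{a n..b n}. card (bd d X (S t)))"
        by (simp add: sum_distrib_left)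
      finally show ?thesis .
    qed
    define w where "w = real (card W)"
    define bj where "bj = real (card Bj)"
    define sb where "sb = real (\<Sum>t\<in>{a n..b n}. card (bd d X (S t)))"
    define B where "B = real (card (bd d X R))"
    define q where "q = real (card Q)"
    have e1: "4 * w \<le> l^2 * bj" unfolding w_def l_def bj_def using hW
      by (metis of_nat_le_iff of_nat_mult of_nat_numeral of_nat_power)
    have e2: "bj + sb \<le> B" unfolding bj_def sb_def B_def using hsplit
      by (metis of_nat_add of_nat_le_iff)
    have e3: "4 * q \<le> M * real cs * sb" unfolding q_def sb_def using q4 .
    have bj0: "0 \<le> bj" and sb0: "0 \<le> sb" unfolding bj_def sb_def by (simp_all add: sum_nonneg)
    have P1: "real (card (X \<inter> R) * card (R - X)) \<le> w * real cs + l * q"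
    proof -
      have "real (card (X \<inter> R) * card (R - X)) \<le> real (card F1) + real (card F2)" using hP by linarith
      also have "real (card F1) \<le> w * real cs" unfolding w_def using hF1 by (metis of_nat_le_iff of_nat_mult)
      also have "real (card F2) \<le> l * q" unfolding l_def q_def using hF2 by (metis of_nat_le_iff of_nat_mult)
      finally show ?thesis by simp
    qed
    have s1: "4 * w * real cs \<le> l^2 * bj * real cs" using mult_right_mono[OF e1 c0] .
    have s2: "l^2 * bj * real cs \<le> M * l * real cs * bj"
    proof -
      have "l * (l * bj * real cs) \<le> M * (l * bj * real cs)"
        by (rule mult_right_mono[OF lM]) (simp add: l0 bj0)
      then show ?thesis by (simp add: power2_eq_square mult_ac)
    qed
    have s3: "4 * l * q \<le> M * l * real cs * sb"
    proof -
      have "l * (4 * q) \<le> l * (M * real cs * sb)" by (rule mult_left_mono[OF e3 l0])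
      then show ?thesis by (simp add: mult_ac)
    qed
    have s4: "M * l * real cs * (bj + sb) \<le> M * l * real cs * B"
      by (rule mult_left_mono[OF e2]) (simp add: M0 l0)
    have "4 * real (card (X \<inter> R)) * real (card (R - X)) \<le> 4 * (w * real cs + l * q)"
      using P1 by simp
    also have "\<dots> \<le> M * l * real cs * (bj + sb)" using s1 s2 s3 by (simp add: algebra_simps)
    also have "\<dots> \<le> M * l * real cs * B" by (rule s4)
    also have "\<dots> = M * real (card R) * B" unfolding cR l_def by simp
    finally show "4 * real (card (X \<inter> rectangle d a b)) * real (card (rectangle d a b - X))
       \<le> M * real (card (rectangle d a b)) * real (card (bd d X (rectangle d a b)))"
      unfolding R_def B_def .
  qed
qed

lemma star:
  fixes M :: real
  assumes "M \<ge> 0" "\<forall>i<d. a i \<le> b i" "\<forall>i<d. real_of_int (b i - a i + 1) \<le> M"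
  shows "4 * real (card (X \<inter> rectangle d a b)) * real (card (rectangle d a b - X))
       \<le> M * real (card (rectangle d a b)) * real (card (bd d X (rectangle d a b)))"
  using star_aux[OF assms(1), of d d X] assms(2,3) by auto



lemma card_II_real: "a \<le> b \<Longrightarrow> real (card {a..b::int}) = real_of_int (b - a + 1)"
  by simp

lemma face_bound:
  fixes \<rho> :: real
  assumes j: "j<d" and ab: "\<forall>i<d. a i \<le> b i" and rho: "\<rho> \<ge> 1"
    and bal: "\<forall>i<d. \<forall>k<d. real_of_int (b i - a i + 1) \<le> \<rho> * real_of_int (b k - a k + 1)"
    and c: "c \<in> {a j..b j}"
  shows "real (card (X \<inter> rectangle d (a(j:=c)) (b(j:=c)))) * real (card (rectangle d a b - X))
     \<le> real (card (rectangle d a b)) * real (card (bd d X (rectangle d a b))) * (1 + \<rho>/4)"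
proof -
  define R where "R = rectangle d a b"
  define S where "S t = rectangle d (a(j:=t)) (b(j:=t))" for t
  define A where "A = X \<inter> S c"
  define cs where "cs = card (S c)"
  define l where "l = real (card {a j..b j})"
  have l_eq: "l = real_of_int (b j - a j + 1)" unfolding l_def using ab j by simp
  have l1: "1 \<le> l" using l_eq ab j by simp
  have csS: "card (S t) = cs" if "t \<in> {a j..b j}" for t
    unfolding cs_def S_def using sl_card[OF j ab that c] .
  have cR: "card R = card {a j..b j} * cs" unfolding R_def cs_def S_def using cardR[OF j ab c] .
  have AR: "A \<subseteq> R" unfolding A_def R_def S_def using S_sub[OF j ab c] by blast
  have finR: "finite R" unfolding R_def by (rule rect_finite)
  define F1 where "F1 = {(x,y). x\<in>A \<and> y\<in>R \<and> x[j:=y!j] \<notin> X}"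
  define F2 where "F2 = {(x,y). x\<in>A \<and> y\<in>R-X \<and> x[j:=y!j] \<in> X}"
  define W where "W = {(x,t). x\<in>A \<and> t\<in>{a j..b j} \<and> x[j:=t]\<notin>X}"
  define Q where "Q = QQ d a b j X"
  define B where "B = real (card (bd d X R))"
  have "A \<times> (R - X) \<subseteq> F1 \<union> F2" unfolding F1_def F2_def using AR by auto
  moreover have "finite (F1 \<union> F2)"
    by (rule finite_subset[of _ "R \<times> R"]) (use AR in \<open>auto simp: F1_def F2_def finR\<close>)
  ultimately have "card (A \<times> (R - X)) \<le> card (F1 \<union> F2)" by (rule card_mono[rotated])
  also have "\<dots> \<le> card F1 + card F2" by (rule card_Un_le)
  finally have hP: "card A * card (R - X) \<le> card F1 + card F2" by (simp add: card_cartesian_product)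
  have hF1: "card F1 \<le> card W * cs" unfolding F1_def W_def cs_def S_def R_def
    by (rule first_count[OF j ab _ c]) (use AR in \<open>simp add: R_def\<close>)
  have hW: "card W \<le> card (bd d X R) * card {a j..b j}" unfolding W_def R_def
    by (rule first_face[OF j ab c]) (simp add: A_def S_def)
  have hF2: "card F2 \<le> card Q" unfolding F2_def Q_def R_def
    by (rule second_face[OF j ab c]) (simp add: A_def S_def)
  have hQ: "card Q = (\<Sum>t\<in>{a j..b j}. card (X \<inter> S t) * card (S t - X))"
    unfolding Q_def S_def by (rule QQ_card[OF j ab])
  have hsplit: "card {p \<in> bd d X R. fst p ! j \<noteq> snd p ! j} + (\<Sum>t\<in>{a j..b j}. card (bd d X (S t))) \<le> card (bd d X R)"
    unfolding S_def R_def by (rule bd_split[OF j ab])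
  then have "(\<Sum>t\<in>{a j..b j}. card (bd d X (S t))) \<le> card (bd d X R)" by linarith
  then have hsb: "real (\<Sum>t\<in>{a j..b j}. card (bd d X (S t))) \<le> B" unfolding B_def
    by (simp only: of_nat_le_iff)
  have M0: "0 \<le> \<rho> * l" using rho l1 by simp
  have IH: "4 * real (card (X \<inter> S t)) * real (card (S t - X)) \<le> (\<rho> * l) * real (card (S t)) * real (card (bd d X (S t)))"
    if t: "t \<in> {a j..b j}" for t
  proof -
    have c1: "\<forall>i<d. (a(j:=t)) i \<le> (b(j:=t)) i" using ab by simp
    have c2: "\<forall>i<d. real_of_int ((b(j:=t)) i - (a(j:=t)) i + 1) \<le> \<rho> * l"
    proof (intro allI impI)
      fix i assume i: "i < d"
      show "real_of_int ((b(j:=t)) i - (a(j:=t)) i + 1) \<le> \<rho> * l"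
      proof (cases "i = j")
        case True
        have "1 * 1 \<le> \<rho> * l" by (rule mult_mono) (use rho l1 in auto)
        then show ?thesis using True by simp
      next
        case False then show ?thesis using bal i j l_eq by simp
      qed
    qed
    show ?thesis unfolding S_def by (rule star[OF M0 c1 c2])
  qed
  have q4: "4 * real (card Q) \<le> \<rho> * l * real cs * B"
  proof -
    have "4 * real (card Q) = (\<Sum>t\<in>{a j..b j}. 4 * (real (card (X \<inter> S t)) * real (card (S t - X))))"
      unfolding hQ by (simp add: sum_distrib_left)
    also have "\<dots> \<le> (\<Sum>t\<in>{a j..b j}. \<rho> * l * real cs * real (card (bd d X (S t))))"
    proof (rule sum_mono)
      fix t assume t: "t \<in> {a j..b j}"
      show "4 * (real (card (X \<inter> S t)) * real (card (S t - X))) \<le> \<rho> * l * real cs * real (card (bd d X (S t)))"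
        using IH[OF t] csS[OF t] by (simp add: mult.assoc)
    qed
    also have "\<dots> = \<rho> * l * real cs * real (\<Sum>t\<in>{a j..b j}. card (bd d X (S t)))"
      by (simp add: sum_distrib_left)
    also have "\<dots> \<le> \<rho> * l * real cs * B"
      by (rule mult_left_mono[OF hsb]) (use M0 in simp)
    finally show ?thesis .
  qed
  have "real (card A * card (R - X)) \<le> real (card F1 + card F2)"
    using hP by (simp only: of_nat_le_iff)
  then have g0: "real (card A) * real (card (R - X)) \<le> real (card F1) + real (card F2)" by simp
  have g1: "real (card F1) \<le> B * real (card R)"
  proof -
    have "card W * cs \<le> card (bd d X R) * card {a j..b j} * cs" by (rule mult_le_mono1[OF hW])
    then have "card F1 \<le> card (bd d X R) * card {a j..b j} * cs" using hF1 by linarith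
    then have "real (card F1) \<le> real (card (bd d X R) * card {a j..b j} * cs)" by (simp only: of_nat_le_iff)
    then show ?thesis unfolding B_def cR by (simp add: mult_ac)
  qed
  have g2: "real (card F2) \<le> \<rho> * l * real cs * B / 4" using hF2 q4 by linarith
  have g3: "B * real (card R) + \<rho> * l * real cs * B / 4 = real (card R) * B * (1 + \<rho>/4)"
    unfolding cR l_def by (simp add: algebra_simps)
  have "real (card A) * real (card (R - X)) \<le> real (card R) * B * (1 + \<rho>/4)"
    using g0 g1 g2 g3 by linarith
  then show ?thesis unfolding A_def S_def R_def B_def .
qed



theorem lemma4p4:
  fixes d :: nat and \<rho> :: real and a b :: "nat \<Rightarrow> int" and X :: "int list set"
  assumes "d \<ge> 2" and "\<rho> \<ge> 1"
    and "balanced d \<rho> a b"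
    and "X \<subseteq> rectangle d a b"
  shows "real (rel_perim d (rectangle d a b) X) \<ge>
    real (perim d X) / (3 * real d * \<rho>) *
    (real (card (rectangle d a b - X)) / real (card (rectangle d a b)))"
proof -
  note d2 = assms(1) and rho = assms(2) and XR = assms(4)
  have ab: "\<forall>i<d. a i \<le> b i" and bal: "\<forall>i<d. \<forall>k<d. real_of_int (b i - a i + 1) \<le> \<rho> * real_of_int (b k - a k + 1)"
    using assms(3) unfolding balanced_def by auto
  define R where "R = rectangle d a b"
  define Fb where "Fb j = X \<inter> rectangle d (a(j:=b j)) (b(j:=b j))" for j
  define Fa where "Fa j = X \<inter> rectangle d (a(j:=a j)) (b(j:=a j))" for j
  define E where "E = bd d X R \<union> (\<Union>j\<in>{..<d}. ((\<lambda>m. (m, m[j:=m!j+1])) ` Fb j \<union> (\<lambda>m. (m, m[j:=m!j-1])) ` Fa j))"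
  have finX: "finite X" using XR rect_finite finite_subset by blast
  have sub: "edge_boundary d X \<subseteq> E"
  proof
    fix p assume "p \<in> edge_boundary d X"
    then obtain m n where p: "p = (m,n)" "m \<in> X" "n \<notin> X" "nbr d m n"
      unfolding edge_boundary_def by auto
    have mR: "m \<in> R" using p(2) XR R_def by auto
    show "p \<in> E"
    proof (cases "n \<in> R")
      case True
      then have "p \<in> bd d X R" using p mR unfolding bd_def edge_boundary_def by auto
      then show ?thesis unfolding E_def by blast
    next
      case False
      from p(4) obtain j where j: "j < d" and lm: "length m = d"
        and nn: "n = m[j:=m!j+1] \<or> n = m[j:=m!j-1]" unfolding nbr_def by auto
      have mj: "a j \<le> m!j" "m!j \<le> b j" using mR j unfolding R_def rectangle_def by auto
      from nn show ?thesis
      proof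
        assume n: "n = m[j:=m!j+1]"
        have "\<not> m!j + 1 \<le> b j"
        proof
          assume "m!j + 1 \<le> b j"
          then have "n \<in> R" unfolding n R_def using upd_mem[OF mR[unfolded R_def]] mj by simp
          then show False using False by simp
        qed
        then have "m!j = b j" using mj by simp
        then have "m \<in> rectangle d (a(j:=b j)) (b(j:=b j))"
          using slice_eq[OF j, of a "b j" b] mj mR R_def by auto
        then have "m \<in> Fb j" unfolding Fb_def using p(2) by simp
        then have "p \<in> (\<lambda>m. (m, m[j:=m!j+1])) ` Fb j" using p(1) n by blast
        then show ?thesis unfolding E_def using j by blast
      next
        assume n: "n = m[j:=m!j-1]"
        have "\<not> a j \<le> m!j - 1"
        proof
          assume "a j \<le> m!j - 1"
          then have "n \<in> R" unfolding n R_def using upd_mem[OF mR[unfolded R_def]] mj by simp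
          then show False using False by simp
        qed
        then have "m!j = a j" using mj by simp
        then have "m \<in> rectangle d (a(j:=a j)) (b(j:=a j))"
          using slice_eq[OF j, of a "a j" b] mj mR R_def by auto
        then have "m \<in> Fa j" unfolding Fa_def using p(2) by simp
        then have "p \<in> (\<lambda>m. (m, m[j:=m!j-1])) ` Fa j" using p(1) n by blast
        then show ?thesis unfolding E_def using j by blast
      qed
    qed
  qed
  have finFb: "finite (Fb j)" for j unfolding Fb_def using finX by simp
  have finFa: "finite (Fa j)" for j unfolding Fa_def using finX by simp
  have finE: "finite E" unfolding E_def R_def using bd_fin finFa finFb by simp
  have "card (edge_boundary d X) \<le> card E" by (rule card_mono[OF finE sub])
  also have "card E \<le> card (bd d X R) + card (\<Union>j\<in>{..<d}. ((\<lambda>m. (m, m[j:=m!j+1])) ` Fb j \<union> (\<lambda>m. (m, m[j:=m!j-1])) ` Fa j))"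
    unfolding E_def by (rule card_Un_le)
  also have "card (\<Union>j\<in>{..<d}. ((\<lambda>m. (m, m[j:=m!j+1])) ` Fb j \<union> (\<lambda>m. (m, m[j:=m!j-1])) ` Fa j))
      \<le> (\<Sum>j<d. card ((\<lambda>m. (m, m[j:=m!j+1])) ` Fb j \<union> (\<lambda>m. (m, m[j:=m!j-1])) ` Fa j))"
    by (rule card_UN_le) simp
  also have "\<dots> \<le> (\<Sum>j<d. card (Fb j) + card (Fa j))"
  proof (rule sum_mono)
    fix j
    have "card ((\<lambda>m. (m, m[j:=m!j+1])) ` Fb j \<union> (\<lambda>m. (m, m[j:=m!j-1])) ` Fa j)
       \<le> card ((\<lambda>m. (m, m[j:=m!j+1])) ` Fb j) + card ((\<lambda>m. (m, m[j:=m!j-1])) ` Fa j)"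
      by (rule card_Un_le)
    also have "\<dots> \<le> card (Fb j) + card (Fa j)"
      using card_image_le[OF finFb, of "\<lambda>m. (m, m[j:=m!j+1])" j] card_image_le[OF finFa, of "\<lambda>m. (m, m[j:=m!j-1])" j]
      by linarith
    finally show "card ((\<lambda>m. (m, m[j:=m!j+1])) ` Fb j \<union> (\<lambda>m. (m, m[j:=m!j-1])) ` Fa j) \<le> card (Fb j) + card (Fa j)" .
  qed
  finally have pbound: "perim d X \<le> card (bd d X R) + (\<Sum>j<d. card (Fb j) + card (Fa j))"
    unfolding perim_def by simp
  define N where "N = real (card (R - X))"
  define r where "r = real (card R)"
  define B where "B = real (card (bd d X R))"
  define p where "p = real (perim d X)"
  have rel: "real (rel_perim d (rectangle d a b) X) = B" unfolding B_def rel_perim_def bd_def R_def by simp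
  have Rne: "R \<noteq> {}" using rect_nonempty[OF ab] R_def by auto
  have finR: "finite R" unfolding R_def by (rule rect_finite)
  have r0: "r > 0" unfolding r_def using Rne finR by (simp add: card_gt_0_iff)
  have Nr: "N \<le> r" unfolding N_def r_def using finR by (simp add: card_mono)
  have N0: "0 \<le> N" unfolding N_def by simp
  have B0: "0 \<le> B" unfolding B_def by simp
  have fb: "real (card (Fb j)) * N \<le> r * B * (1 + \<rho>/4)" if j: "j < d" for j
    unfolding Fb_def N_def r_def B_def R_def
    by (rule face_bound[OF j ab rho bal]) (use ab j in simp)
  have fa: "real (card (Fa j)) * N \<le> r * B * (1 + \<rho>/4)" if j: "j < d" for j
    unfolding Fa_def N_def r_def B_def R_def
    by (rule face_bound[OF j ab rho bal]) (use ab j in simp)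
  have "p \<le> B + (\<Sum>j<d. real (card (Fb j)) + real (card (Fa j)))"
    unfolding p_def B_def using pbound
    by (metis (no_types, lifting) of_nat_add of_nat_le_iff of_nat_sum sum.cong)
  then have "p * N \<le> (B + (\<Sum>j<d. real (card (Fb j)) + real (card (Fa j)))) * N"
    by (rule mult_right_mono[OF _ N0])
  also have "\<dots> = B * N + (\<Sum>j<d. real (card (Fb j)) * N + real (card (Fa j)) * N)"
    by (simp add: distrib_right sum_distrib_right)
  also have "\<dots> \<le> B * r + (\<Sum>j<d. 2 * (r * B * (1 + \<rho>/4)))"
  proof -
    have "B * N \<le> B * r" by (rule mult_left_mono[OF Nr B0])
    moreover have "(\<Sum>j<d. real (card (Fb j)) * N + real (card (Fa j)) * N) \<le> (\<Sum>j<d. 2 * (r * B * (1 + \<rho>/4)))"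
    proof (rule sum_mono)
      fix j assume "j \<in> {..<d}"
      then have "j < d" by simp
      then show "real (card (Fb j)) * N + real (card (Fa j)) * N \<le> 2 * (r * B * (1 + \<rho>/4))"
        using fb fa by fastforce
    qed
    ultimately show ?thesis by linarith
  qed
  also have "\<dots> = r * B * (1 + 2 * real d * (1 + \<rho>/4))" by (simp add: algebra_simps)
  also have "\<dots> \<le> r * B * (3 * real d * \<rho>)"
  proof (rule mult_left_mono)
    have "real d * (5/2 * \<rho> - 2) \<ge> 2 * (1/2)"
      by (rule mult_mono) (use d2 rho in auto)
    then show "1 + 2 * real d * (1 + \<rho>/4) \<le> 3 * real d * \<rho>" by (simp add: algebra_simps)
    show "0 \<le> r * B" using r0 B0 by simp
  qed
  finally have key: "p * N \<le> r * B * (3 * real d * \<rho>)" .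
  have pos: "0 < 3 * real d * \<rho> * r" using d2 rho r0 by simp
  have "p / (3 * real d * \<rho>) * (N / r) = (p * N) / (3 * real d * \<rho> * r)" by simp
  also have "\<dots> \<le> B" using key pos by (simp add: divide_le_eq mult_ac)
  finally show ?thesis unfolding rel p_def N_def r_def R_def .
qed


end
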